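(* Let $F$ be an SCF on $n$ voters and $m\ge 3$ alternatives, and let $G$ be the GSWF defined from $F$ as follows: for alternatives $a\ne b$ and profile $x$, $G^{a,b}(x)=1$ if $\Pr_{x'}[F(x')=a\mid x'^{a,b}=x^{a,b}]>\Pr_{x'}[F(x')=b\mid x'^{a,b}=x^{a,b}]$, $G^{a,b}(x)=0$ if the reverse strict inequality holds, and in case of equality $G^{a,b}(x)$ equals the preference of a fixed voter between $a$ and $b$. Let $N^{a,b}(F)$ be the probability over a uniform profile $x$ that either $F(x)=a$ and $G^{a,b}(x)=0$, or $F(x)=b$ and $G^{a,b}(x)=1$. Then for every pair of distinct alternatives $a,b$, \[ M^{a,b}(F)\ge \big(N^{a,b}(F)\big)^2. \]
   Context: Profiles $x,x'\in(L_m)^n$ are uniformly random ($L_m$ the linear orders on $m$ alternatives). $x^{a,b}\in\{0,1\}^n$ has $x^{a,b}_i=1$ iff voter $i$ ranks $a$ above $b$. $M^{a,b}(F)=\Pr[F(x)=a,\ F(x')=b]$ with $x,x'$ uniform subject to $x^{a,b}=x'^{a,b}$. *)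

theory Defs
  imports Complex_Main "HOL-Combinatorics.Multiset_Permutations"
begin

text \<open>Alternatives are 0..m-1, voters are 0..n-1. A linear order on the alternatives
is a list enumerating them from top (position 0) to bottom.\<close>

definition linorders :: "nat \<Rightarrow> nat list set" where
  "linorders m = permutations_of_set {..<m}"

definition ranks_above :: "nat list \<Rightarrow> nat \<Rightarrow> nat \<Rightarrow> bool" where
  "ranks_above r a b \<longleftrightarrow> (\<exists>i j. i < j \<and> j < length r \<and> r ! i = a \<and> r ! j = b)"

definition profiles :: "nat \<Rightarrow> nat \<Rightarrow> (nat \<Rightarrow> nat list) set" where
  "profiles n m = PiE {..<n} (\<lambda>_. linorders m)"

definition pairvec :: "nat \<Rightarrow> (nat \<Rightarrow> nat list) \<Rightarrow> nat \<Rightarrow> nat \<Rightarrow> (nat \<Rightarrow> bool)" where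
  "pairvec n x a b = (\<lambda>i. if i < n then ranks_above (x i) a b else False)"

definition cond_prob :: "nat \<Rightarrow> nat \<Rightarrow> ((nat \<Rightarrow> nat list) \<Rightarrow> nat) \<Rightarrow> nat \<Rightarrow> nat
    \<Rightarrow> (nat \<Rightarrow> nat list) \<Rightarrow> nat \<Rightarrow> real" where
  "cond_prob n m F a b x c =
     real (card {x' \<in> profiles n m. pairvec n x' a b = pairvec n x a b \<and> F x' = c})
     / real (card {x' \<in> profiles n m. pairvec n x' a b = pairvec n x a b})"

text \<open>The GSWF G^{a,b} derived from F (True = 1, False = 0); ties broken by voter v.\<close>
definition GSWF :: "nat \<Rightarrow> nat \<Rightarrow> nat \<Rightarrow> ((nat \<Rightarrow> nat list) \<Rightarrow> nat) \<Rightarrow> nat \<Rightarrow> nat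
    \<Rightarrow> (nat \<Rightarrow> nat list) \<Rightarrow> bool" where
  "GSWF n m v F a b x =
     (if cond_prob n m F a b x a > cond_prob n m F a b x b then True
      else if cond_prob n m F a b x a < cond_prob n m F a b x b then False
      else ranks_above (x v) a b)"

definition N_ab :: "nat \<Rightarrow> nat \<Rightarrow> nat \<Rightarrow> ((nat \<Rightarrow> nat list) \<Rightarrow> nat) \<Rightarrow> nat \<Rightarrow> nat \<Rightarrow> real" where
  "N_ab n m v F a b =
     real (card {x \<in> profiles n m. (F x = a \<and> \<not> GSWF n m v F a b x) \<or> (F x = b \<and> GSWF n m v F a b x)})
     / real (card (profiles n m))"

text \<open>M^{a,b}(F): (x,x') uniform among pairs of profiles with x^{a,b} = x'^{a,b}.\<close>
definition M_ab :: "nat \<Rightarrow> nat \<Rightarrow> ((nat \<Rightarrow> nat list) \<Rightarrow> nat) \<Rightarrow> nat \<Rightarrow> nat \<Rightarrow> real" where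
  "M_ab n m F a b =
     real (card {(x, x'). x \<in> profiles n m \<and> x' \<in> profiles n m \<and>
                   pairvec n x a b = pairvec n x' a b \<and> F x = a \<and> F x' = b})
     / real (card {(x, x'). x \<in> profiles n m \<and> x' \<in> profiles n m \<and>
                   pairvec n x a b = pairvec n x' a b})"

end

theory Submission
  imports Defs "HOL-Analysis.Analysis" "HOL-Combinatorics.Transposition"
begin

lemma ranks_above_distinct:
  assumes "distinct r" "a \<in> set r" "b \<in> set r" "a \<noteq> b"
  shows "ranks_above r b a \<longleftrightarrow> \<not> ranks_above r a b"
proof -
  obtain i where i: "i < length r" "r ! i = a" using assms(2) by (auto simp: in_set_conv_nth)
  obtain j where j: "j < length r" "r ! j = b" using assms(3) by (auto simp: in_set_conv_nth)
  have uniq: "\<And>k l. k < length r \<Longrightarrow> l < length r \<Longrightarrow> r ! k = r ! l \<Longrightarrow> k = l"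
    using assms(1) nth_eq_iff_index_eq by blast
  have ij: "i \<noteq> j" using i j assms(4) by auto
  have 1: "ranks_above r a b \<longleftrightarrow> i < j"
    unfolding ranks_above_def using i j uniq
    by (metis order.strict_trans)
  have 2: "ranks_above r b a \<longleftrightarrow> j < i"
    unfolding ranks_above_def using i j uniq
    by (metis order.strict_trans)
  show ?thesis using 1 2 ij by auto
qed

lemma ranks_above_swap:
  assumes "a \<noteq> b"
  shows "ranks_above (map (Transposition.transpose a b) r) a b \<longleftrightarrow> ranks_above r b a"
proof -
  have e: "\<And>x. Transposition.transpose a b x = a \<longleftrightarrow> x = b"
          "\<And>x. Transposition.transpose a b x = b \<longleftrightarrow> x = a"
    using assms by (auto simp: transpose_eq_iff)
  show ?thesis unfolding ranks_above_def
    by (auto simp: e) (metis e length_map nth_map order.strict_trans)+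
qed

lemma swap_perm:
  assumes "r \<in> linorders m" "a < m" "b < m"
  shows "map (Transposition.transpose a b) r \<in> linorders m"
proof -
  have "set r = {..<m}" "distinct r" using assms(1) by (auto simp: linorders_def permutations_of_set_def)
  moreover have "Transposition.transpose a b ` {..<m} = {..<m}" using assms(2,3)
    by (simp add: transpose_image_eq)
  ultimately show ?thesis by (auto simp: linorders_def permutations_of_set_def distinct_map)
qed

lemma card_S_eq:
  assumes "a < m" "b < m" "a \<noteq> b"
  shows "card {r \<in> linorders m. ranks_above r a b = True} = card {r \<in> linorders m. ranks_above r a b = False}"
proof -
  let ?s = "map (Transposition.transpose a b)"
  have inj: "inj ?s" by (simp add: inj_mapI)
  have key: "\<And>r. r \<in> linorders m \<Longrightarrow> ranks_above (?s r) a b \<longleftrightarrow> \<not> ranks_above r a b"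
  proof -
    fix r assume r: "r \<in> linorders m"
    have "set r = {..<m}" "distinct r" using r by (auto simp: linorders_def permutations_of_set_def)
    then show "ranks_above (?s r) a b \<longleftrightarrow> \<not> ranks_above r a b"
      using ranks_above_swap[OF assms(3)] ranks_above_distinct[of r a b] assms by auto
  qed
  have fin: "finite (linorders m)" by (simp add: linorders_def)
  show ?thesis
  proof (rule antisym)
    show "card {r \<in> linorders m. ranks_above r a b = True} \<le> card {r \<in> linorders m. ranks_above r a b = False}"
      by (rule card_inj_on_le[where f="?s"]) (use inj key swap_perm assms fin in \<open>auto simp: inj_on_def\<close>)
    show "card {r \<in> linorders m. ranks_above r a b = False} \<le> card {r \<in> linorders m. ranks_above r a b = True}"
      by (rule card_inj_on_le[where f="?s"]) (use inj key swap_perm assms fin in \<open>auto simp: inj_on_def\<close>)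
  qed
qed

lemma card_split:
  assumes "finite X"
  shows "card {x \<in> X. Q x} = (\<Sum>z\<in>f ` X. card {x \<in> X. f x = z \<and> Q x})"
proof -
  have "card {x \<in> X. Q x} = (\<Sum>x\<in>X. if Q x then 1 else 0)"
    using sum.inter_filter[OF assms, of "\<lambda>_. 1::nat" Q] by simp
  also have "\<dots> = (\<Sum>z\<in>f ` X. \<Sum>x\<in>{x. x \<in> X \<and> f x = z}. if Q x then 1 else 0)"
    by (rule sum.image_gen[OF assms])
  also have "\<dots> = (\<Sum>z\<in>f ` X. card {x \<in> X. f x = z \<and> Q x})"
  proof (rule sum.cong[OF refl])
    fix z
    have "finite {x. x \<in> X \<and> f x = z}" using assms by simp
    from sum.inter_filter[OF this, of "\<lambda>_. 1::nat" Q, symmetric]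
    show "(\<Sum>x\<in>{x. x \<in> X \<and> f x = z}. if Q x then 1 else 0) = card {x \<in> X. f x = z \<and> Q x}"
      by (simp add: conj_assoc)
  qed
  finally show ?thesis .
qed

theorem proposition4p6:
  fixes n m v a b :: nat and F :: "(nat \<Rightarrow> nat list) \<Rightarrow> nat"
  assumes "m \<ge> 3"
    and "v < n"
    and "\<forall>x \<in> profiles n m. F x < m"
    and "a < m" and "b < m" and "a \<noteq> b"
  shows "M_ab n m F a b \<ge> (N_ab n m v F a b) ^ 2"
proof -
  define P where "P = profiles n m"
  define pv where "pv = (\<lambda>x. pairvec n x a b)"
  define Z where "Z = pv ` P"
  define S where "S = (\<lambda>t. {r \<in> linorders m. ranks_above r a b = t})"
  define K where "K = card (S True) ^ n"
  define A where "A = (\<lambda>z. card {x \<in> P. pv x = z \<and> F x = a})"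
  define B where "B = (\<lambda>z. card {x \<in> P. pv x = z \<and> F x = b})"
  define g where "g = (\<lambda>z. B z < A z \<or> (A z = B z \<and> z v))"
  have finL: "finite (linorders m)" by (simp add: linorders_def)
  have finP: "finite P" unfolding P_def profiles_def using finL by (simp add: finite_PiE)
  have finZ: "finite Z" unfolding Z_def using finP by simp
  have SF: "card (S False) = card (S True)" unfolding S_def using card_S_eq[OF assms(4,5,6)] by simp
  have classcard: "card {y \<in> P. pv y = pv x} = K" if x: "x \<in> P" for x
  proof -
    have "{y \<in> P. pv y = pv x} = PiE {..<n} (\<lambda>i. S (ranks_above (x i) a b))"
      using x unfolding P_def profiles_def pv_def pairvec_def S_def
      by (auto simp: PiE_iff fun_eq_iff extensional_def)
    then have "card {y \<in> P. pv y = pv x} = (\<Prod>i<n. card (S (ranks_above (x i) a b)))"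
      by (simp add: card_PiE)
    also have "\<dots> = (\<Prod>i<n. card (S True))"
    proof (rule prod.cong[OF refl])
      fix i
      have "\<And>t. card (S t) = card (S True)" using SF by (metis (full_types))
      then show "card (S (ranks_above (x i) a b)) = card (S True)" .
    qed
    finally show ?thesis by (simp add: K_def)
  qed
  have Pne: "P \<noteq> {}"
  proof -
    have "linorders m \<noteq> {}" unfolding linorders_def
      by (metis finite_lessThan permutations_of_set_empty_iff empty_iff)
    then show ?thesis unfolding P_def profiles_def by (simp add: PiE_eq_empty_iff)
  qed
  then obtain x0 where x0: "x0 \<in> P" by blast
  have Kpos: "K > 0"
  proof -
    have "finite {y \<in> P. pv y = pv x0}" using finP by simp
    moreover have "x0 \<in> {y \<in> P. pv y = pv x0}" using x0 by simp
    ultimately have "card {y \<in> P. pv y = pv x0} > 0" by (metis card_gt_0_iff empty_iff)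
    then show ?thesis using classcard[OF x0] by simp
  qed
  have Zpos: "card Z > 0" using finZ x0 unfolding Z_def by (auto simp: card_gt_0_iff)
  have cardP: "card P = card Z * K"
  proof -
    have "card P = card {x \<in> P. True}" by simp
    also have "\<dots> = (\<Sum>z\<in>Z. card {x \<in> P. pv x = z \<and> True})"
      unfolding Z_def by (rule card_split[OF finP])
    also have "\<dots> = (\<Sum>z\<in>Z. K)"
      by (rule sum.cong) (auto simp: Z_def classcard)
    finally show ?thesis by simp
  qed
  have G: "GSWF n m v F a b x = g (pv x)" if x: "x \<in> P" for x
  proof -
    have c1: "cond_prob n m F a b x a = real (A (pv x)) / real K"
      "cond_prob n m F a b x b = real (B (pv x)) / real K"
      unfolding cond_prob_def A_def B_def using classcard[OF x]
      by (simp_all add: P_def pv_def)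
    have "pv x v = ranks_above (x v) a b" using assms(2) by (simp add: pv_def pairvec_def)
    moreover have dc: "\<And>p q::nat. real p / real K < real q / real K \<longleftrightarrow> p < q"
      using Kpos by (simp add: divide_less_cancel)
    ultimately show ?thesis unfolding GSWF_def c1 g_def dc
      by auto
  qed
  have Nnum: "card {x \<in> profiles n m. (F x = a \<and> \<not> GSWF n m v F a b x) \<or> (F x = b \<and> GSWF n m v F a b x)}
      = (\<Sum>z\<in>Z. min (A z) (B z))"
  proof -
    have "{x \<in> profiles n m. (F x = a \<and> \<not> GSWF n m v F a b x) \<or> (F x = b \<and> GSWF n m v F a b x)}
        = {x \<in> P. (F x = a \<and> \<not> g (pv x)) \<or> (F x = b \<and> g (pv x))}"
      using G unfolding P_def by auto
    also have "card \<dots> = (\<Sum>z\<in>Z. card {x \<in> P. pv x = z \<and> ((F x = a \<and> \<not> g (pv x)) \<or> (F x = b \<and> g (pv x)))})"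
      unfolding Z_def by (rule card_split[OF finP])
    also have "\<dots> = (\<Sum>z\<in>Z. min (A z) (B z))"
    proof (rule sum.cong[OF refl])
      fix z
      show "card {x \<in> P. pv x = z \<and> ((F x = a \<and> \<not> g (pv x)) \<or> (F x = b \<and> g (pv x)))} = min (A z) (B z)"
      proof (cases "g z")
        case True
        then have "{x \<in> P. pv x = z \<and> ((F x = a \<and> \<not> g (pv x)) \<or> (F x = b \<and> g (pv x)))} = {x \<in> P. pv x = z \<and> F x = b}"
          by auto
        moreover have "B z \<le> A z" using True by (auto simp: g_def)
        ultimately show ?thesis by (simp add: B_def min_def)
      next
        case False
        then have "{x \<in> P. pv x = z \<and> ((F x = a \<and> \<not> g (pv x)) \<or> (F x = b \<and> g (pv x)))} = {x \<in> P. pv x = z \<and> F x = a}"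
          by auto
        moreover have "A z \<le> B z" using False by (auto simp: g_def)
        ultimately show ?thesis by (simp add: A_def min_def)
      qed
    qed
    finally show ?thesis .
  qed
  have Mnum: "card {(x, x'). x \<in> profiles n m \<and> x' \<in> profiles n m \<and>
                   pairvec n x a b = pairvec n x' a b \<and> F x = a \<and> F x' = b} = (\<Sum>z\<in>Z. A z * B z)"
  proof -
    have "{(x, x'). x \<in> profiles n m \<and> x' \<in> profiles n m \<and>
                   pairvec n x a b = pairvec n x' a b \<and> F x = a \<and> F x' = b}
        = Sigma P (\<lambda>x. if F x = a then {x' \<in> P. pv x' = pv x \<and> F x' = b} else {})"
      unfolding P_def pv_def by (auto split: if_splits)
    also have "card \<dots> = (\<Sum>x\<in>P. card (if F x = a then {x' \<in> P. pv x' = pv x \<and> F x' = b} else {}))"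
      using finP by (intro card_SigmaI) auto
    also have "\<dots> = (\<Sum>x\<in>P. if F x = a then B (pv x) else 0)"
      by (rule sum.cong) (auto simp: B_def)
    also have "\<dots> = (\<Sum>z\<in>Z. \<Sum>x\<in>{x. x \<in> P \<and> pv x = z}. if F x = a then B (pv x) else 0)"
      unfolding Z_def by (rule sum.image_gen[OF finP])
    also have "\<dots> = (\<Sum>z\<in>Z. A z * B z)"
    proof (rule sum.cong[OF refl])
      fix z
      have "(\<Sum>x\<in>{x. x \<in> P \<and> pv x = z}. if F x = a then B (pv x) else 0)
          = (\<Sum>x\<in>{x. x \<in> P \<and> pv x = z}. if F x = a then B z else 0)"
        by (rule sum.cong) auto
      also have "\<dots> = (\<Sum>x\<in>{x \<in> {x. x \<in> P \<and> pv x = z}. F x = a}. B z)"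
        using finP by (subst sum.inter_filter) auto
      also have "\<dots> = A z * B z" unfolding A_def
        by (simp add: conj_assoc)
      finally show "(\<Sum>x\<in>{x. x \<in> P \<and> pv x = z}. if F x = a then B (pv x) else 0) = A z * B z" .
    qed
    finally show ?thesis .
  qed
  have Mden: "card {(x, x'). x \<in> profiles n m \<and> x' \<in> profiles n m \<and>
                   pairvec n x a b = pairvec n x' a b} = card Z * K * K"
  proof -
    have "{(x, x'). x \<in> profiles n m \<and> x' \<in> profiles n m \<and>
                   pairvec n x a b = pairvec n x' a b}
        = Sigma P (\<lambda>x. {x' \<in> P. pv x' = pv x})"
      unfolding P_def pv_def by auto
    also have "card \<dots> = (\<Sum>x\<in>P. card {x' \<in> P. pv x' = pv x})"
      using finP by (intro card_SigmaI) auto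
    also have "\<dots> = (\<Sum>x\<in>P. K)"
      by (rule sum.cong) (auto simp: classcard)
    finally show ?thesis by (simp add: cardP)
  qed
  have ineq: "(\<Sum>z\<in>Z. real (min (A z) (B z)))^2 \<le> real (card Z) * (\<Sum>z\<in>Z. real (A z * B z))"
  proof -
    have "(\<Sum>z\<in>Z. real (min (A z) (B z)))^2 \<le> (\<Sum>z\<in>Z. (real (min (A z) (B z)))^2) * card Z"
      by (rule sum_squared_le_sum_of_squares)
    also have "\<dots> \<le> (\<Sum>z\<in>Z. real (A z * B z)) * card Z"
    proof (rule mult_right_mono[OF sum_mono])
      fix z
      have "min (A z) (B z) * min (A z) (B z) \<le> A z * B z"
        by (rule mult_mono) auto
      then have "real (min (A z) (B z) * min (A z) (B z)) \<le> real (A z * B z)" by linarith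
      then show "(real (min (A z) (B z)))^2 \<le> real (A z * B z)"
        by (simp add: power2_eq_square)
    qed simp
    finally show ?thesis by (simp add: mult.commute)
  qed
  define sm where "sm = (\<Sum>z\<in>Z. real (min (A z) (B z)))"
  define sp where "sp = (\<Sum>z\<in>Z. real (A z * B z))"
  have NN: "N_ab n m v F a b = sm / (real (card Z) * real K)"
    unfolding N_ab_def sm_def using Nnum cardP by (simp add: P_def)
  have MM: "M_ab n m F a b = sp / (real (card Z) * real K * real K)"
    unfolding M_ab_def sp_def using Mnum Mden by simp
  have ineq': "sm^2 \<le> real (card Z) * sp" using ineq unfolding sm_def sp_def .
  have zk: "real (card Z) > 0" "real K > 0" using Zpos Kpos by auto
  have "(sm / (real (card Z) * real K))^2 = sm^2 / (real (card Z) * (real (card Z) * real K * real K))"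
    by (simp add: power2_eq_square)
  also have "\<dots> \<le> (real (card Z) * sp) / (real (card Z) * (real (card Z) * real K * real K))"
    using ineq' zk by (intro divide_right_mono) auto
  also have "\<dots> = sp / (real (card Z) * real K * real K)"
    using zk by simp
  finally show ?thesis unfolding NN MM .
qed

end
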